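(* Let $H=(V,E)$ be an uncapacitated hypergraph, let $v_1,\ldots,v_n$ be an MA-ordering of $H$, fix a head ordering of the edges induced by it, let $k$ be a non-negative integer, and let $H_k$ be the hypergraph constructed from $H$ with respect to this ordering as described in the context. Then for every $A\subseteq V$, $|\delta_{H_k}(A)|\ge \min\{k,|\delta_H(A)|\}$.
   Context: A hypergraph $H=(V,E)$ has a finite vertex set $V$ and a finite multiset $E$ of edges, each a subset of $V$; uncapacitated means all edges have capacity $1$ (parallel edges allowed). For $S\subseteq V$, $\delta_H(S)$ is the set (multiset) of edges meeting both $S$ and $V\setminus S$. For subsets $A_1,\ldots,A_k\subseteq V$, $d(A_1,\ldots,A_k)$ is the number of edges that intersect every $A_i$; a single vertex $v$ stands for $\{v\}$. For an ordering $v_1,\ldots,v_n$ of $V$ let $V_i=\{v_1,\ldots,v_i\}$ ($V_0=\emptyset$). The ordering is an MA-ordering if $d(V_{i-1},v_i)\ge d(V_{i-1},v_j)$ for all $1\le i<j\le n$. The head $h(e)$ of an edge $e$ is the vertex of $e$ with smallest index. An ordering $e_1,\ldots,e_m$ of the edges is a head ordering if the index of $h(e_i)$ is non-decreasing in $i$. An edge $e$ is a backward edge of $v$ if $v\in e$ and $h(e)\ne v$. $D_k(v)$ denotes the first $k$ backward edges of $v$ in the head ordering (all of them if $v$ has fewer than $k$). For each $e\in E$ let $e'=\{v\in e : e\in D_k(v)\}\cup\{h(e)\}$, and let $H_k=(V,E_k)$ with $E_k$ the multiset $\{e' : e\in E,\ |e'|\ge 2\}$. *)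

theory Defs
  imports Main "HOL-Library.Multiset"
begin

(* Hypergraph: vertex set V = set vs, edges: a multiset E of vertex sets.
   The vertex ordering v_1..v_n is the list vs (0-based indices in Isabelle). *)

definition dcount :: "'a set multiset \<Rightarrow> 'a set list \<Rightarrow> nat" where
  "dcount E As = size (filter_mset (\<lambda>e. \<forall>A\<in>set As. e \<inter> A \<noteq> {}) E)"

definition cut_size :: "'a set \<Rightarrow> 'a set multiset \<Rightarrow> 'a set \<Rightarrow> nat" where
  "cut_size V E S = size (filter_mset (\<lambda>e. e \<inter> S \<noteq> {} \<and> e \<inter> (V - S) \<noteq> {}) E)"

(* MA-ordering: d(V_{i-1}, v_i) >= d(V_{i-1}, v_j) for i < j  (0-based: V_{i-1} = set (take i vs)) *)
definition is_MA_ordering :: "'a list \<Rightarrow> 'a set multiset \<Rightarrow> bool" where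
  "is_MA_ordering vs E \<longleftrightarrow> distinct vs \<and>
     (\<forall>i j. i < j \<and> j < length vs \<longrightarrow>
        dcount E [set (take i vs), {vs ! j}] \<le> dcount E [set (take i vs), {vs ! i}])"

definition hidx :: "'a list \<Rightarrow> 'a set \<Rightarrow> nat" where
  "hidx vs e = (LEAST i. i < length vs \<and> vs ! i \<in> e)"

definition head :: "'a list \<Rightarrow> 'a set \<Rightarrow> 'a" where
  "head vs e = vs ! hidx vs e"

definition is_head_ordering :: "'a list \<Rightarrow> 'a set multiset \<Rightarrow> 'a set list \<Rightarrow> bool" where
  "is_head_ordering vs E es \<longleftrightarrow> mset es = E \<and> sorted (map (hidx vs) es)"

definition backward :: "'a list \<Rightarrow> 'a set list \<Rightarrow> 'a \<Rightarrow> nat \<Rightarrow> bool" where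
  "backward vs es v p \<longleftrightarrow> p < length es \<and> v \<in> es ! p \<and> head vs (es ! p) \<noteq> v"

definition in_Dk :: "nat \<Rightarrow> 'a list \<Rightarrow> 'a set list \<Rightarrow> 'a \<Rightarrow> nat \<Rightarrow> bool" where
  "in_Dk k vs es v p \<longleftrightarrow> backward vs es v p \<and> card {q. q < p \<and> backward vs es v q} < k"

definition trunc_edge :: "nat \<Rightarrow> 'a list \<Rightarrow> 'a set list \<Rightarrow> nat \<Rightarrow> 'a set" where
  "trunc_edge k vs es p = {v \<in> es ! p. in_Dk k vs es v p} \<union> {head vs (es ! p)}"

definition Ek :: "nat \<Rightarrow> 'a list \<Rightarrow> 'a set list \<Rightarrow> 'a set multiset" where
  "Ek k vs es = mset (filter (\<lambda>e. 2 \<le> card e) (map (trunc_edge k vs es) [0..<length es]))"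

end

theory Submission
  imports Defs
begin

lemma size_filter_le_add:
  "(\<And>x. x \<in># M \<Longrightarrow> P x \<Longrightarrow> Q x \<or> R x) \<Longrightarrow>
   size (filter_mset P M) \<le> size (filter_mset Q M) + size (filter_mset R M)"
  by (induction M) auto

lemma size_filter_add_le:
  "(\<And>x. x \<in># M \<Longrightarrow> Q x \<Longrightarrow> R x \<Longrightarrow> False) \<Longrightarrow>
   (\<And>x. x \<in># M \<Longrightarrow> Q x \<or> R x \<Longrightarrow> P x) \<Longrightarrow>
   size (filter_mset Q M) + size (filter_mset R M) \<le> size (filter_mset P M)"
proof (induction M)
  case (add x M)
  have "size (filter_mset Q M) + size (filter_mset R M) \<le> size (filter_mset P M)"
    using add.prems by (intro add.IH) auto
  then show ?case using add.prems by auto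
qed auto

lemma size_filter_mono':
  "(\<And>x. x \<in># M \<Longrightarrow> P x \<Longrightarrow> Q x) \<Longrightarrow>
   size (filter_mset P M) \<le> size (filter_mset Q M)"
  by (induction M) auto

lemma dcount2: "dcount F [X, {y}] = size {#e \<in># F. e \<inter> X \<noteq> {} \<and> y \<in> e#}"
  unfolding dcount_def by (rule arg_cong[where f=size], rule filter_mset_cong) auto

lemma in_take: "x \<in> set (take l xs) \<longleftrightarrow> (\<exists>m. m < l \<and> m < length xs \<and> xs ! m = x)"
  by (auto simp: in_set_conv_nth)

definition Cr :: "'a list \<Rightarrow> 'a set \<Rightarrow> 'a set multiset \<Rightarrow> nat \<Rightarrow> nat" where
  "Cr vs A F t = size {#e \<in># F. (e \<inter> set (take t vs)) \<inter> A \<noteq> {} \<and> (e \<inter> set (take t vs)) - A \<noteq> {}#}"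

lemma Cr_le: "Cr vs A F t \<le> cut_size (set vs) F A"
  unfolding Cr_def cut_size_def
  apply (rule size_filter_mono')
  using set_take_subset by fastforce

lemma SW:
  assumes MA: "\<And>i j. i < j \<Longrightarrow> j < length vs \<Longrightarrow>
     dcount F [set (take i vs), {vs!j}] \<le> dcount F [set (take i vs), {vs!i}]"
  shows "0 < l \<Longrightarrow> l < length vs \<Longrightarrow> (vs!(l-1) \<in> A) \<noteq> (vs!l \<in> A) \<Longrightarrow>
     dcount F [set (take l vs), {vs!l}] \<le> Cr vs A F (Suc l)"
proof (induction l rule: less_induct)
  case (less l)
  define P where "P i \<longleftrightarrow> (\<forall>m. i \<le> m \<and> m < l \<longrightarrow> (vs!m \<in> A) \<noteq> (vs!l \<in> A))" for i
  define i0 where "i0 = (LEAST i. P i)"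
  have Pl: "P l" by (auto simp add: P_def)
  have Pi0: "P i0" using LeastI[of P l] Pl i0_def by simp
  have i0l: "i0 \<le> l" using Least_le[of P l] Pl i0_def by simp
  have prev: "(vs!(i0-1) \<in> A) = (vs!l \<in> A)" if "i0 > 0"
  proof -
    have "\<not> P (i0-1)" using not_less_Least[of "i0-1" P] i0_def that by simp
    then obtain m where m: "i0-1 \<le> m" "m < l" "(vs!m \<in> A) = (vs!l\<in>A)" by (auto simp: P_def)
    have "\<not> i0 \<le> m" using Pi0 m unfolding P_def by blast
    then have "m = i0 - 1" using m(1) by arith
    then show ?thesis using m by simp
  qed
  have i0ltl: "i0 < l"
    using i0l prev less.prems by (cases "i0 = l") auto
  have A1: "dcount F [set (take i0 vs), {vs!l}] \<le> Cr vs A F (Suc i0)"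
  proof (cases "i0 = 0")
    case True then show ?thesis by (simp add: dcount_def)
  next
    case False
    have "dcount F [set (take i0 vs), {vs!l}] \<le> dcount F [set (take i0 vs), {vs!i0}]"
      using MA i0ltl less.prems(2) by blast
    also have "\<dots> \<le> Cr vs A F (Suc i0)"
      using less.IH[of i0] False i0ltl prev Pi0 less.prems(2) unfolding P_def by auto
    finally show ?thesis .
  qed
  have A2: "dcount F [set (take l vs), {vs!l}] \<le> dcount F [set (take i0 vs), {vs!l}] +
     size {#e\<in>#F. vs!l \<in> e \<and> e \<inter> set (take l vs) \<noteq> {} \<and> e \<inter> set (take i0 vs) = {}#}"
    unfolding dcount2 by (rule size_filter_le_add) auto
  have tk: "set (take (Suc i0) vs) = set (take i0 vs) \<union> {vs!i0}"
    using i0ltl less.prems(2) by (simp add: take_Suc_conv_app_nth)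
  have A3: "Cr vs A F (Suc i0) +
     size {#e\<in>#F. vs!l \<in> e \<and> e \<inter> set (take l vs) \<noteq> {} \<and> e \<inter> set (take i0 vs) = {}#}
     \<le> Cr vs A F (Suc l)"
    unfolding Cr_def
  proof (rule size_filter_add_le)
    fix e
    assume "(e \<inter> set (take (Suc i0) vs)) \<inter> A \<noteq> {} \<and> (e \<inter> set (take (Suc i0) vs)) - A \<noteq> {}"
      "vs!l \<in> e \<and> e \<inter> set (take l vs) \<noteq> {} \<and> e \<inter> set (take i0 vs) = {}"
    then show False using tk by blast
  next
    fix e
    assume a: "(e \<inter> set (take (Suc i0) vs)) \<inter> A \<noteq> {} \<and> (e \<inter> set (take (Suc i0) vs)) - A \<noteq> {} \<or>
      vs!l \<in> e \<and> e \<inter> set (take l vs) \<noteq> {} \<and> e \<inter> set (take i0 vs) = {}"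
    have sub: "set (take (Suc i0) vs) \<subseteq> set (take (Suc l) vs)"
      using i0ltl by (simp add: set_take_subset_set_take)
    have vl: "vs!l \<in> set (take (Suc l) vs)" using less.prems(2) by (auto simp: in_take)
    show "(e \<inter> set (take (Suc l) vs)) \<inter> A \<noteq> {} \<and> (e \<inter> set (take (Suc l) vs)) - A \<noteq> {}"
      using a
    proof
      assume "(e \<inter> set (take (Suc i0) vs)) \<inter> A \<noteq> {} \<and> (e \<inter> set (take (Suc i0) vs)) - A \<noteq> {}"
      then show ?thesis using sub by blast
    next
      assume b: "vs!l \<in> e \<and> e \<inter> set (take l vs) \<noteq> {} \<and> e \<inter> set (take i0 vs) = {}"
      then obtain x where x: "x \<in> e" "x \<in> set (take l vs)" "x \<notin> set (take i0 vs)" by blast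
      then obtain m where m: "m < l" "m < length vs" "vs!m = x" by (auto simp: in_take)
      have "\<not> m < i0" using x m by (auto simp: in_take)
      then have "(vs!m \<in> A) \<noteq> (vs!l \<in> A)" using Pi0 m unfolding P_def by auto
      moreover have "x \<in> set (take (Suc l) vs)" using m unfolding in_take by (intro exI[of _ m]) auto
      ultimately show ?thesis using b x m vl by blast
    qed
  qed
  show ?case using A1 A2 A3 by linarith
qed

lemma rank_card:
  assumes "finite (B::nat set)"
  shows "card {p\<in>B. card {q\<in>B. q < p} < k} = min k (card B)"
proof -
  define r where "r p = card {q\<in>B. q < p}" for p
  have inj: "inj_on r B"
  proof (rule inj_onI)
    fix p p' assume pp: "p \<in> B" "p' \<in> B" "r p = r p'"
    show "p = p'"
    proof (rule ccontr)
      assume "p \<noteq> p'"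
      then have "p < p' \<or> p' < p" by arith
      then show False
      proof
        assume "p < p'"
        then have "{q\<in>B. q < p} \<subset> {q\<in>B. q < p'}" using pp by auto
        then have "r p < r p'" unfolding r_def using assms by (intro psubset_card_mono) auto
        then show False using pp by simp
      next
        assume "p' < p"
        then have "{q\<in>B. q < p'} \<subset> {q\<in>B. q < p}" using pp by auto
        then have "r p' < r p" unfolding r_def using assms by (intro psubset_card_mono) auto
        then show False using pp by simp
      qed
    qed
  qed
  have img: "r ` B \<subseteq> {..<card B}"
  proof
    fix x assume "x \<in> r ` B"
    then obtain p where p: "p \<in> B" "x = r p" by auto
    have "{q\<in>B. q < p} \<subset> B" using p by auto
    then have "r p < card B" unfolding r_def using assms by (intro psubset_card_mono) auto
    then show "x \<in> {..<card B}" using p by simp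
  qed
  have imgeq: "r ` B = {..<card B}"
    using card_image[OF inj] img by (intro card_subset_eq) auto
  have "r ` {p\<in>B. r p < k} = {..<min k (card B)}"
  proof
    show "r ` {p\<in>B. r p < k} \<subseteq> {..<min k (card B)}" using img by auto
    show "{..<min k (card B)} \<subseteq> r ` {p\<in>B. r p < k}"
    proof
      fix x assume x: "x \<in> {..<min k (card B)}"
      then have "x \<in> r ` B" using imgeq by auto
      then obtain p where "p \<in> B" "x = r p" by auto
      then show "x \<in> r ` {p\<in>B. r p < k}" using x by auto
    qed
  qed
  moreover have "card (r ` {p\<in>B. r p < k}) = card {p\<in>B. r p < k}"
    using inj by (intro card_image) (auto intro: inj_on_subset)
  ultimately show ?thesis unfolding r_def by simp
qed


lemma hidx_props:
  assumes "e \<subseteq> set vs" "e \<noteq> {}"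
  shows "hidx vs e < length vs" "vs ! hidx vs e \<in> e"
    "\<And>i. i < hidx vs e \<Longrightarrow> vs!i \<notin> e"
    "\<And>i. i < length vs \<Longrightarrow> vs!i \<in> e \<Longrightarrow> hidx vs e \<le> i"
proof -
  obtain x where "x \<in> e" using assms by auto
  then obtain i where i: "i < length vs" "vs!i \<in> e" using assms by (metis in_set_conv_nth subsetD)
  have ex: "\<exists>i. i < length vs \<and> vs!i \<in> e" using i by auto
  show "hidx vs e < length vs" "vs ! hidx vs e \<in> e"
    using LeastI_ex[OF ex] unfolding hidx_def by auto
  show "\<And>i. i < hidx vs e \<Longrightarrow> vs!i \<notin> e"
    using LeastI_ex[OF ex] not_less_Least unfolding hidx_def
    by (metis (mono_tags, lifting) order.strict_trans)
  show "\<And>i. i < length vs \<Longrightarrow> vs!i \<in> e \<Longrightarrow> hidx vs e \<le> i"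
    unfolding hidx_def by (rule Least_le) auto
qed

lemma size_mset_filter_card:
  "size (filter_mset P (mset xs)) = card {p. p < length xs \<and> P (xs!p)}"
  by (metis length_filter_conv_card mset_filter size_mset)

lemma Ek_size:
  "size (filter_mset P (Ek k vs es)) =
   card {p. p < length es \<and> P (trunc_edge k vs es p) \<and> 2 \<le> card (trunc_edge k vs es p)}"
proof -
  have "filter_mset P (Ek k vs es) =
    mset (filter (\<lambda>e. 2 \<le> card e \<and> P e) (map (trunc_edge k vs es) [0..<length es]))"
    unfolding Ek_def by (simp flip: mset_filter add: filter_filter conj_commute)
  then show ?thesis
    apply (simp only: size_mset length_filter_conv_card length_map length_upt)
    by (rule arg_cong[where f=card]) auto
qed

lemma card2: "finite X \<Longrightarrow> x \<in> X \<Longrightarrow> y \<in> X \<Longrightarrow> x \<noteq> y \<Longrightarrow> 2 \<le> card X"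
  by (metis card_2_iff card_mono empty_subsetI insert_subset)


lemma Dk_card: "card {p. in_Dk k vs es v p} = min k (card {p. backward vs es v p})"
proof -
  define B where "B = {p. backward vs es v p}"
  have fin: "finite B" unfolding B_def backward_def by (rule finite_subset[of _ "{..<length es}"]) auto
  have "{p. in_Dk k vs es v p} = {p\<in>B. card {q\<in>B. q < p} < k}"
    unfolding in_Dk_def B_def by (auto simp: conj_commute)
  then show ?thesis using rank_card[OF fin, of k] B_def by simp
qed

lemma tr_sub:
  assumes "es!p \<noteq> {}" "es!p \<subseteq> set vs"
  shows "trunc_edge k vs es p \<subseteq> es!p"
  using hidx_props(2)[OF assms(2,1)] unfolding trunc_edge_def head_def by auto

lemma tr_fin:
  assumes "es!p \<subseteq> set vs"
  shows "finite (trunc_edge k vs es p)"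
proof -
  have "finite (es!p)" using assms finite_subset by blast
  then show ?thesis unfolding trunc_edge_def by auto
qed

lemma head_tr: "head vs (es!p) \<in> trunc_edge k vs es p"
  unfolding trunc_edge_def by auto

lemma backward_iff:
  assumes "distinct vs" "p < length es" "es!p \<subseteq> set vs" "i < length vs"
  shows "(es!p \<inter> set (take i vs) \<noteq> {} \<and> vs!i \<in> es!p) \<longleftrightarrow> backward vs es (vs!i) p"
proof
  assume a: "es!p \<inter> set (take i vs) \<noteq> {} \<and> vs!i \<in> es!p"
  then have ne: "es!p \<noteq> {}" by auto
  from a obtain m where m: "m < i" "m < length vs" "vs!m \<in> es!p" by (auto simp: in_take)
  have "hidx vs (es!p) \<le> m" using hidx_props(4)[OF assms(3) ne] m by auto
  then have "hidx vs (es!p) \<noteq> i" using m by auto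
  then have "head vs (es!p) \<noteq> vs!i"
    unfolding head_def using hidx_props(1)[OF assms(3) ne] assms(1,4) nth_eq_iff_index_eq by blast
  then show "backward vs es (vs!i) p" using a assms(2) unfolding backward_def by auto
next
  assume b: "backward vs es (vs!i) p"
  then have vi: "vs!i \<in> es!p" "head vs (es!p) \<noteq> vs!i" unfolding backward_def by auto
  then have ne: "es!p \<noteq> {}" by auto
  have "hidx vs (es!p) \<le> i" using hidx_props(4)[OF assms(3) ne] vi assms(4) by auto
  moreover have "hidx vs (es!p) \<noteq> i" using vi(2) unfolding head_def by auto
  ultimately have "hidx vs (es!p) < i" by auto
  then have "vs ! hidx vs (es!p) \<in> set (take i vs)"
    using hidx_props(1)[OF assms(3) ne] unfolding in_take by blast
  then show "es!p \<inter> set (take i vs) \<noteq> {} \<and> vs!i \<in> es!p"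
    using hidx_props(2)[OF assms(3) ne] vi by auto
qed

lemma dE_card:
  assumes "distinct vs" "\<And>p. p < length es \<Longrightarrow> es!p \<subseteq> set vs" "i < length vs"
  shows "dcount (mset es) [set (take i vs), {vs!i}] = card {p. backward vs es (vs!i) p}"
  unfolding dcount2 size_mset_filter_card
  using backward_iff[OF assms(1) _ assms(2) assms(3)]
  by (metis (no_types, lifting) backward_def)

lemma Ek_lower:
  assumes "distinct vs" "\<And>p. p < length es \<Longrightarrow> es!p \<subseteq> set vs" "i < length vs"
  shows "min k (dcount (mset es) [set (take i vs), {vs!i}]) \<le> dcount (Ek k vs es) [set (take i vs), {vs!i}]"
proof -
  have "{p. in_Dk k vs es (vs!i) p} \<subseteq>
    {p. p < length es \<and> (trunc_edge k vs es p \<inter> set (take i vs) \<noteq> {} \<and> vs!i \<in> trunc_edge k vs es p)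
       \<and> 2 \<le> card (trunc_edge k vs es p)}"
  proof
    fix p assume p: "p \<in> {p. in_Dk k vs es (vs!i) p}"
    then have bw: "backward vs es (vs!i) p" and pl: "p < length es" unfolding in_Dk_def backward_def by auto
    have "es!p \<inter> set (take i vs) \<noteq> {} \<and> vs!i \<in> es!p"
      using backward_iff[OF assms(1) pl assms(2)[OF pl] assms(3)] bw by auto
    have ne: "es!p \<noteq> {}" using bw unfolding backward_def by auto
    have vi: "vs!i \<in> trunc_edge k vs es p" using p bw unfolding trunc_edge_def backward_def by auto
    have "hidx vs (es!p) \<le> i" using hidx_props(4)[OF assms(2)[OF pl] ne] bw assms(3)
      unfolding backward_def by auto
    moreover have "hidx vs (es!p) \<noteq> i" using bw unfolding head_def backward_def by auto
    ultimately have hin: "head vs (es!p) \<in> set (take i vs)"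
      unfolding head_def using hidx_props(1)[OF assms(2)[OF pl] ne] unfolding in_take
      by (intro exI[of _ "hidx vs (es!p)"]) auto
    have "vs!i \<notin> set (take i vs)" using assms(1,3)
      by (auto simp: in_take nth_eq_iff_index_eq)
    then have "2 \<le> card (trunc_edge k vs es p)"
      using card2[OF tr_fin[OF assms(2)[OF pl]] vi head_tr[of vs es p k]] hin by metis
    then show "p \<in> {p. p < length es \<and> (trunc_edge k vs es p \<inter> set (take i vs) \<noteq> {} \<and> vs!i \<in> trunc_edge k vs es p)
       \<and> 2 \<le> card (trunc_edge k vs es p)}" using pl vi hin head_tr[of vs es p k] by auto
  qed
  then have "card {p. in_Dk k vs es (vs!i) p} \<le> dcount (Ek k vs es) [set (take i vs), {vs!i}]"
    unfolding dcount2 Ek_size by (intro card_mono) auto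
  then show ?thesis using Dk_card dE_card[OF assms] by metis
qed

lemma Ek_upper:
  assumes "distinct vs" "\<And>p. p < length es \<Longrightarrow> es!p \<subseteq> set vs" "i < j" "j < length vs"
  shows "dcount (Ek k vs es) [set (take i vs), {vs!j}] \<le> min k (dcount (mset es) [set (take i vs), {vs!j}])"
proof -
  define S where "S = {p. p < length es \<and> (trunc_edge k vs es p \<inter> set (take i vs) \<noteq> {} \<and> vs!j \<in> trunc_edge k vs es p)
       \<and> 2 \<le> card (trunc_edge k vs es p)}"
  have key: "in_Dk k vs es (vs!j) p \<and> (es!p \<inter> set (take i vs) \<noteq> {} \<and> vs!j \<in> es!p)" if "p \<in> S" for p
  proof -
    have pl: "p < length es" and t: "trunc_edge k vs es p \<inter> set (take i vs) \<noteq> {}"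
      "vs!j \<in> trunc_edge k vs es p" "2 \<le> card (trunc_edge k vs es p)" using that S_def by auto
    have ne: "es!p \<noteq> {}"
    proof
      assume "es!p = {}"
      then have "trunc_edge k vs es p = {head vs (es!p)}" unfolding trunc_edge_def by auto
      then show False using t(3) by simp
    qed
    have sub: "trunc_edge k vs es p \<subseteq> es!p" using tr_sub[OF ne assms(2)[OF pl]] .
    have "in_Dk k vs es (vs!j) p"
    proof (rule ccontr)
      assume nd: "\<not> in_Dk k vs es (vs!j) p"
      then have "vs!j = head vs (es!p)" using t(2) unfolding trunc_edge_def by auto
      then have "hidx vs (es!p) = j" unfolding head_def
        using hidx_props(1)[OF assms(2)[OF pl] ne] assms(1,4) nth_eq_iff_index_eq by metis
      moreover obtain x where "x \<in> trunc_edge k vs es p" "x \<in> set (take i vs)" using t(1) by auto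
      then obtain m where "m < i" "vs!m \<in> es!p" using sub by (auto simp: in_take)
      ultimately show False using hidx_props(3)[OF assms(2)[OF pl] ne, of m] assms(3) by auto
    qed
    then show ?thesis using t sub by auto
  qed
  have "card S \<le> card {p. in_Dk k vs es (vs!j) p}"
    using key by (intro card_mono) (auto simp: in_Dk_def backward_def intro: finite_subset[of _ "{..<length es}"])
  also have "\<dots> \<le> k" using Dk_card by (metis min.cobounded1)
  finally have c1: "card S \<le> k" .
  have "card S \<le> card {p. p < length es \<and> (es!p \<inter> set (take i vs) \<noteq> {} \<and> vs!j \<in> es!p)}"
    using key S_def by (intro card_mono) auto
  then show ?thesis using c1 unfolding dcount2 Ek_size size_mset_filter_card S_def by auto
qed

lemma Ek_MA:
  assumes "distinct vs" "\<And>p. p < length es \<Longrightarrow> es!p \<subseteq> set vs" "is_MA_ordering vs (mset es)"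
    "i < j" "j < length vs"
  shows "dcount (Ek k vs es) [set (take i vs), {vs!j}] \<le> dcount (Ek k vs es) [set (take i vs), {vs!i}]"
proof -
  have "dcount (mset es) [set (take i vs), {vs!j}] \<le> dcount (mset es) [set (take i vs), {vs!i}]"
    using assms(3-5) unfolding is_MA_ordering_def by blast
  then show ?thesis using Ek_upper[OF assms(1,2,4,5), of k] Ek_lower[OF assms(1,2), of i k] assms(4,5)
    by linarith
qed


lemma exists_active:
  "a < b \<Longrightarrow> (vs!a \<in> A) \<noteq> (vs!b \<in> A) \<Longrightarrow>
   \<exists>l. a < l \<and> l \<le> b \<and> (vs!(l-1) \<in> A) \<noteq> (vs!l \<in> A)"
proof (induction b)
  case 0 then show ?case by simp
next
  case (Suc b)
  show ?case
  proof (cases "(vs!b \<in> A) = (vs!Suc b \<in> A)")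
    case True
    then have "a < b" using Suc.prems by (metis less_antisym)
    then obtain l where "a < l" "l \<le> b" "(vs!(l-1) \<in> A) \<noteq> (vs!l \<in> A)"
      using Suc.IH Suc.prems True by blast
    then show ?thesis by (intro exI[of _ l]) auto
  next
    case False
    then show ?thesis using Suc.prems by (intro exI[of _ "Suc b"]) auto
  qed
qed

theorem mainTheorem2:
  fixes vs :: "'a list" and E :: "'a set multiset" and es :: "'a set list"
    and k :: nat and A :: "'a set"
  assumes "\<forall>e\<in>#E. e \<subseteq> set vs"
    and "is_MA_ordering vs E"
    and "is_head_ordering vs E es"
    and "A \<subseteq> set vs"
  shows "cut_size (set vs) (Ek k vs es) A \<ge> min k (cut_size (set vs) E A)"
proof -
  have Ees: "E = mset es" and srt: "sorted (map (hidx vs) es)"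
    using assms(3) unfolding is_head_ordering_def by auto
  have dvs: "distinct vs" using assms(2) unfolding is_MA_ordering_def by auto
  have sub: "es!p \<subseteq> set vs" if "p < length es" for p
    using assms(1) that Ees by (metis in_set_conv_nth set_mset_mset)
  have MA: "is_MA_ordering vs (mset es)" using assms(2) Ees by simp
  define cross where "cross X \<longleftrightarrow> X \<inter> A \<noteq> {} \<and> X \<inter> (set vs - A) \<noteq> {}" for X
  define tr where "tr p = trunc_edge k vs es p" for p
  have cH: "cut_size (set vs) E A = card {p. p < length es \<and> cross (es!p)}"
    unfolding cut_size_def Ees size_mset_filter_card cross_def by simp
  have cK: "cut_size (set vs) (Ek k vs es) A = card {p. p < length es \<and> cross (tr p) \<and> 2 \<le> card (tr p)}"
    unfolding cut_size_def Ek_size cross_def tr_def by simp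
  show ?thesis
  proof (cases "\<forall>p < length es. cross (es!p) \<longrightarrow> cross (tr p)")
    case True
    have "card {p. p < length es \<and> cross (es!p)} \<le> card {p. p < length es \<and> cross (tr p) \<and> 2 \<le> card (tr p)}"
    proof (rule card_mono)
      show "finite {p. p < length es \<and> cross (tr p) \<and> 2 \<le> card (tr p)}" by simp
      show "{p. p < length es \<and> cross (es!p)} \<subseteq> {p. p < length es \<and> cross (tr p) \<and> 2 \<le> card (tr p)}"
      proof
        fix p assume "p \<in> {p. p < length es \<and> cross (es!p)}"
        then have pl: "p < length es" and c: "cross (tr p)" using True by auto
        then obtain x y where "x \<in> tr p" "x \<in> A" "y \<in> tr p" "y \<notin> A" unfolding cross_def by auto
        moreover have fin: "finite (tr p)" using tr_fin[OF sub[OF pl]] tr_def by simp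
        ultimately have "2 \<le> card (tr p)" using card2[OF fin, of x y] by blast
        then show "p \<in> {p. p < length es \<and> cross (tr p) \<and> 2 \<le> card (tr p)}" using pl c by auto
      qed
    qed
    then show ?thesis using cH cK by simp
  next
    case False
    then obtain p where pl: "p < length es" and ce: "cross (es!p)" and ct: "\<not> cross (tr p)" by auto
    define e where "e = es!p"
    have ne: "e \<noteq> {}" using ce e_def cross_def by auto
    have esub: "e \<subseteq> set vs" using sub[OF pl] e_def by simp
    define a where "a = hidx vs e"
    have an: "a < length vs" using hidx_props(1)[OF esub ne] a_def by simp
    have ue: "vs!a \<in> e" using hidx_props(2)[OF esub ne] a_def by simp
    have ut: "vs!a \<in> tr p" using head_tr[of vs es p k] unfolding tr_def head_def a_def e_def .
    obtain v where ve: "v \<in> e" and vside: "(v \<in> A) \<noteq> (vs!a \<in> A)"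
      using ce ue unfolding cross_def e_def by blast
    have vV: "v \<in> set vs" using ve esub by auto
    have uV: "vs!a \<in> set vs" using an by simp
    have vt: "v \<notin> tr p"
    proof
      assume "v \<in> tr p"
      then have "cross (tr p)"
      proof (cases "v \<in> A")
        case True
        then have "vs!a \<in> tr p \<inter> (set vs - A)" using ut vside uV by auto
        then show ?thesis using True \<open>v \<in> tr p\<close> unfolding cross_def by blast
      next
        case False
        then have "vs!a \<in> tr p \<inter> A" using ut vside by auto
        moreover have "v \<in> tr p \<inter> (set vs - A)" using False vV \<open>v \<in> tr p\<close> by auto
        ultimately show ?thesis unfolding cross_def by blast
      qed
      then show False using ct by simp
    qed
    have bw: "backward vs es v p" using pl ve vside unfolding backward_def head_def a_def e_def by auto
    have notD: "\<not> in_Dk k vs es v p" using vt ve unfolding tr_def trunc_edge_def e_def by auto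
    have kle: "k \<le> card {q. q < p \<and> backward vs es v q}" using notD bw unfolding in_Dk_def by auto
    obtain b where bn: "b < length vs" and vb: "v = vs!b" using vV by (auto simp: in_set_conv_nth)
    have "a \<le> b" using hidx_props(4)[OF esub ne bn] ve vb a_def by simp
    moreover have "a \<noteq> b" using vside vb by auto
    ultimately have ab: "a < b" by simp
    obtain l where l: "a < l" "l \<le> b" "(vs!(l-1) \<in> A) \<noteq> (vs!l \<in> A)"
      using exists_active[OF ab, where A=A and vs=vs] vside vb by auto
    have ln: "l < length vs" using l bn by simp
    have qsub: "{q. q < p \<and> backward vs es v q} \<subseteq>
      {q. q < length es \<and> (es!q \<inter> set (take l vs) \<noteq> {} \<and> vs!b \<in> es!q)}"
    proof
      fix q assume "q \<in> {q. q < p \<and> backward vs es v q}"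
      then have qp: "q < p" and vq: "v \<in> es!q" unfolding backward_def by auto
      have ql: "q < length es" using qp pl by simp
      have neq: "es!q \<noteq> {}" using vq by auto
      have "hidx vs (es!q) \<le> hidx vs (es!p)"
        using sorted_nth_mono[OF srt, of q p] qp pl by simp
      then have "hidx vs (es!q) < l" using l a_def e_def by simp
      then have "vs ! hidx vs (es!q) \<in> set (take l vs)"
        using hidx_props(1)[OF sub[OF ql] neq] unfolding in_take by blast
      then show "q \<in> {q. q < length es \<and> (es!q \<inter> set (take l vs) \<noteq> {} \<and> vs!b \<in> es!q)}"
        using hidx_props(2)[OF sub[OF ql] neq] ql vq vb by auto
    qed
    have "card {q. q < p \<and> backward vs es v q} \<le>
      card {q. q < length es \<and> (es!q \<inter> set (take l vs) \<noteq> {} \<and> vs!b \<in> es!q)}"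
      by (rule card_mono[OF _ qsub]) simp
    then have "k \<le> dcount (mset es) [set (take l vs), {vs!b}]"
      unfolding dcount2 size_mset_filter_card using kle by linarith
    also have "\<dots> \<le> dcount (mset es) [set (take l vs), {vs!l}]"
    proof (cases "l = b")
      case False
      then show ?thesis using MA l bn unfolding is_MA_ordering_def by auto
    qed simp
    finally have k1: "k \<le> dcount (mset es) [set (take l vs), {vs!l}]" .
    have "k \<le> dcount (Ek k vs es) [set (take l vs), {vs!l}]"
      using Ek_lower[OF dvs sub ln, of k] k1 by simp
    also have "\<dots> \<le> Cr vs A (Ek k vs es) (Suc l)"
    proof -
      have ma: "\<And>i j. i < j \<Longrightarrow> j < length vs \<Longrightarrow>
        dcount (Ek k vs es) [set (take i vs), {vs!j}] \<le> dcount (Ek k vs es) [set (take i vs), {vs!i}]"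
        using Ek_MA[OF dvs sub MA] by blast
      show ?thesis by (rule SW[OF ma]) (use l ln in auto)
    qed
    also have "\<dots> \<le> cut_size (set vs) (Ek k vs es) A" by (rule Cr_le)
    finally show ?thesis by simp
  qed
qed

end
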